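(* Let $r\ge 2$, $s$, $t$ be integers with $r+2 \le s \le t-r+1$. Then \[ P_2(\mathcal{C}(s,r)) \le \Big(1 - \frac{1}{rs^2}\Big)\, P_2(\mathcal{L}(s,r,t)). \]
   Context: For a hypergraph $H$, $P_2(H)=\sum_x d(x)^2$ with $d(x)$ the number of edges containing $x$. The colex order on $r$-subsets of $\mathbb{N}$ is $A<B$ iff $\sum_{i\in A}2^i<\sum_{i\in B}2^i$, and $\mathcal{C}(s,r)$ is the family of the first $s$ $r$-subsets of $\mathbb{N}$ in colex order. The lex order on $[t]^{(r)}$ (the $r$-subsets of $\{1,\dots,t\}$) is $A<B$ iff $\min(A\triangle B)\in A$, and $\mathcal{L}(s,r,t)$ is the $r$-graph on $[t]$ consisting of the first $s$ sets of $[t]^{(r)}$ in lex order. *)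

theory Defs
  imports Complex_Main
begin

definition degree :: "'a set set \<Rightarrow> 'a \<Rightarrow> nat" where
  "degree H x = card {e \<in> H. x \<in> e}"

definition P2 :: "'a set set \<Rightarrow> nat" where
  "P2 H = (\<Sum>x\<in>\<Union>H. (degree H x)^2)"

definition colex_val :: "nat set \<Rightarrow> nat" where
  "colex_val A = (\<Sum>i\<in>A. 2^i)"

definition colex_less :: "nat set \<Rightarrow> nat set \<Rightarrow> bool" where
  "colex_less A B \<longleftrightarrow> colex_val A < colex_val B"

text \<open>C(s,r): the first s r-subsets of nat in colex order, i.e. those r-sets
  having fewer than s r-sets strictly before them.\<close>
definition colex_family :: "nat \<Rightarrow> nat \<Rightarrow> nat set set" where
  "colex_family s r = {A. finite A \<and> card A = r \<and>
     card {B. finite B \<and> card B = r \<and> colex_less B A} < s}"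

definition lex_less :: "nat set \<Rightarrow> nat set \<Rightarrow> bool" where
  "lex_less A B \<longleftrightarrow> A \<noteq> B \<and> Min (A - B \<union> (B - A)) \<in> A"

definition lex_family :: "nat \<Rightarrow> nat \<Rightarrow> nat \<Rightarrow> nat set set" where
  "lex_family s r t = {A. A \<subseteq> {1..t} \<and> card A = r \<and>
     card {B. B \<subseteq> {1..t} \<and> card B = r \<and> lex_less B A} < s}"

end

theory Submission
  imports Defs "HOL-Library.Nat_Bijection"
begin


lemma val_eq: "colex_val = set_encode"
  unfolding colex_val_def[abs_def] set_encode_def by simp

lemma val_inj: "finite A \<Longrightarrow> finite B \<Longrightarrow> colex_val A = colex_val B \<Longrightarrow> A = B"
  by (simp add: val_eq set_encode_eq)

lemma elem_bound: "finite B \<Longrightarrow> i \<in> B \<Longrightarrow> (2::nat)^i \<le> colex_val B"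
  unfolding colex_val_def by (rule member_le_sum) auto

lemma elem_less: "finite B \<Longrightarrow> colex_val B < v \<Longrightarrow> i \<in> B \<Longrightarrow> i < v"
proof -
  assume a: "finite B" "colex_val B < v" "i \<in> B"
  have "i < 2^i" by (rule less_exp)
  also have "... \<le> colex_val B" using elem_bound a by blast
  finally show ?thesis using a by linarith
qed

lemma geom: "(\<Sum>i<n. (2::nat)^i) + 1 = 2^n"
  by (induct n) auto

lemma sub_bound: "B \<subseteq> {..<n} \<Longrightarrow> colex_val B < 2^n"
proof -
  assume "B \<subseteq> {..<n}"
  then have "colex_val B \<le> (\<Sum>i<n. (2::nat)^i)"
    unfolding colex_val_def by (intro sum_mono2) auto
  then show ?thesis using geom[of n] by linarith
qed

lemma lower: "finite B \<Longrightarrow> 2 ^ card B \<le> colex_val B + 1"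
proof (induct "card B" arbitrary: B)
  case 0
  then show ?case by simp
next
  case (Suc k)
  then have ne: "B \<noteq> {}" by auto
  define m where "m = Max B"
  have mB: "m \<in> B" using Suc ne m_def by simp
  have "B \<subseteq> {..m}" using Suc m_def by auto
  then have "card B \<le> Suc m" using card_mono[of "{..m}" B] by simp
  then have km: "k \<le> m" using Suc by simp
  have ck: "card (B - {m}) = k" using Suc mB by simp
  have IH: "2 ^ k \<le> colex_val (B - {m}) + 1" using Suc(1)[of "B - {m}"] Suc(3) ck by simp
  have "colex_val B = 2^m + colex_val (B - {m})"
    unfolding colex_val_def using Suc mB by (simp add: sum.remove)
  moreover have "(2::nat)^k \<le> 2^m" using km by (simp add: power_increasing)
  moreover have "(2::nat) ^ card B = 2^k + 2^k" using \<open>Suc k = card B\<close>[symmetric] by simp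
  ultimately show ?case using IH by linarith
qed

lemma rank_fin: "finite {B. finite B \<and> card B = r \<and> colex_less B A}"
proof -
  have "{B. finite B \<and> card B = r \<and> colex_less B A} \<subseteq> Pow {..<colex_val A}"
    unfolding colex_less_def using elem_less by blast
  then show ?thesis by (rule finite_subset) simp
qed

definition rank :: "nat \<Rightarrow> nat set \<Rightarrow> nat" where
  "rank r A = card {B. finite B \<and> card B = r \<and> colex_less B A}"

lemma rank_mono: "A \<in> colex_family s r \<Longrightarrow> A' \<in> colex_family s r \<Longrightarrow> colex_val A < colex_val A'
   \<Longrightarrow> rank r A < rank r A'"
  unfolding rank_def
proof (rule psubset_card_mono[OF rank_fin])
  assume a: "A \<in> colex_family s r" "A' \<in> colex_family s r" "colex_val A < colex_val A'"
  show "{B. finite B \<and> card B = r \<and> colex_less B A} \<subset> {B. finite B \<and> card B = r \<and> colex_less B A'}"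
    using a unfolding colex_less_def colex_family_def by auto
qed

lemma colex_inj: "inj_on (rank r) (colex_family s r)"
proof (rule inj_onI)
  fix A A' assume a: "A \<in> colex_family s r" "A' \<in> colex_family s r" "rank r A = rank r A'"
  have f: "finite A" "finite A'" using a unfolding colex_family_def by auto
  show "A = A'"
  proof (rule ccontr)
    assume "A \<noteq> A'"
    then have "colex_val A \<noteq> colex_val A'" using val_inj f by blast
    then show False using rank_mono[OF a(1,2)] rank_mono[OF a(2,1)] a(3) by linarith
  qed
qed

lemma colex_card: "finite (colex_family s r) \<and> card (colex_family s r) \<le> s"
proof -
  have sub: "rank r ` colex_family s r \<subseteq> {..<s}"
    unfolding colex_family_def rank_def by auto
  have "finite (colex_family s r)"
    using finite_imageD[OF finite_subset[OF sub] colex_inj] by simp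
  moreover have "card (colex_family s r) \<le> s"
    using card_inj_on_le[OF colex_inj sub] by simp
  ultimately show ?thesis by simp
qed


lemma val_insert: "finite B \<Longrightarrow> m \<notin> B \<Longrightarrow> colex_val (insert m B) = 2^m + colex_val B"
  unfolding colex_val_def by simp

lemma card_rsub: "card {B. B \<subseteq> {..r} \<and> card B = r} = Suc r"
  using n_subsets[of "{..r}" r] by simp

lemma A0_in: assumes "r + 2 \<le> s" shows "{1..r} \<in> colex_family s r"
proof -
  let ?R = "{B. finite B \<and> card B = r \<and> colex_less B {1..r}}"
  have v: "colex_val {1..r} < 2^(r+1)" by (rule sub_bound) auto
  have "?R \<subseteq> {B. B \<subseteq> {..r} \<and> card B = r} - {{1..r}}"
  proof
    fix B assume "B \<in> ?R"
    then have b: "finite B" "card B = r" "colex_val B < colex_val {1..r}"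
      unfolding colex_less_def by auto
    have "B \<subseteq> {..r}"
    proof
      fix i assume "i \<in> B"
      then have "2^i \<le> colex_val B" using elem_bound b by blast
      then have "(2::nat)^i < 2^(r+1)" using b v by linarith
      then have "i < r + 1" by (rule power_less_imp_less_exp[rotated]) simp
      then show "i \<in> {..r}" by simp
    qed
    then show "B \<in> {B. B \<subseteq> {..r} \<and> card B = r} - {{1..r}}" using b by auto
  qed
  then have "card ?R \<le> card ({B. B \<subseteq> {..r} \<and> card B = r} - {{1..r}})"
    by (intro card_mono) auto
  also have "... = r" using card_rsub[of r] by (subst card_Diff_singleton) auto
  finally show ?thesis unfolding colex_family_def using assms by auto
qed

lemma C0_in: assumes "r + 2 \<le> s" "r \<ge> 2" shows "insert (r+1) {..<r-1} \<in> colex_family s r"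
proof -
  let ?C = "insert (r+1) {..<r-1}"
  let ?R = "{B. finite B \<and> card B = r \<and> colex_less B ?C}"
  have vC: "colex_val ?C = 2^(r+1) + colex_val {..<r-1}" by (rule val_insert) auto
  have vK: "colex_val {..<r-1} + 1 = 2^(r-1)" using geom[of "r-1"] unfolding colex_val_def by simp
  have v: "colex_val ?C < 2^(r+2)" by (rule sub_bound) auto
  have cC: "card ?C = r" using assms by simp
  have "?R \<subseteq> {B. B \<subseteq> {..r} \<and> card B = r}"
  proof
    fix B assume "B \<in> ?R"
    then have b: "finite B" "card B = r" "colex_val B < colex_val ?C"
      unfolding colex_less_def by auto
    have sub: "B \<subseteq> {..r+1}"
    proof
      fix i assume "i \<in> B"
      then have "2^i \<le> colex_val B" using elem_bound b by blast
      then have "(2::nat)^i < 2^(r+2)" using b v by linarith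
      then have "i < r + 2" by (rule power_less_imp_less_exp[rotated]) simp
      then show "i \<in> {..r+1}" by simp
    qed
    have "r + 1 \<notin> B"
    proof
      assume m: "r + 1 \<in> B"
      have e: "B = insert (r+1) (B - {r+1})" using m by auto
      have "colex_val B = 2^(r+1) + colex_val (B - {r+1})"
        using b(1) by (subst e) (rule val_insert, auto)
      then have lt: "colex_val (B - {r+1}) + 1 < 2^(r-1)" using b(3) vC vK by linarith
      have "2 ^ card (B - {r+1}) \<le> colex_val (B - {r+1}) + 1" using lower b(1) by blast
      moreover have "card (B - {r+1}) = r - 1" using b m by simp
      ultimately show False using lt by simp
    qed
    then have "B \<subseteq> {..r}" using sub by (auto simp: le_Suc_eq)
    then show "B \<in> {B. B \<subseteq> {..r} \<and> card B = r}" using b by auto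
  qed
  then have "card ?R \<le> card {B. B \<subseteq> {..r} \<and> card B = r}"
    by (intro card_mono) auto
  also have "... = Suc r" by (rule card_rsub)
  finally show ?thesis unfolding colex_family_def using assms cC by auto
qed


lemma P2_pairs:
  assumes "finite H" "\<forall>A\<in>H. finite A"
  shows "P2 H = (\<Sum>A\<in>H. \<Sum>B\<in>H. card (A \<inter> B))"
proof -
  have fU: "finite (\<Union>H)" using assms by auto
  have deg: "degree H x = (\<Sum>A\<in>H. if x \<in> A then 1 else 0)" for x
    unfolding degree_def using assms(1) by (simp add: sum.inter_filter[symmetric])
  have "P2 H = (\<Sum>x\<in>\<Union>H. \<Sum>A\<in>H. \<Sum>B\<in>H. (if x \<in> A then 1 else 0) * (if x \<in> B then 1 else 0))"
    unfolding P2_def deg power2_eq_square by (simp add: sum_product)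
  also have "... = (\<Sum>A\<in>H. \<Sum>B\<in>H. \<Sum>x\<in>\<Union>H. (if x \<in> A then 1 else 0) * (if x \<in> B then 1 else 0))"
    by (subst sum.swap) (simp add: sum.swap[of _ H "\<Union>H"])
  also have "... = (\<Sum>A\<in>H. \<Sum>B\<in>H. card (A \<inter> B))"
  proof (intro sum.cong refl)
    fix A B assume ab: "A \<in> H" "B \<in> H"
    have "(\<Sum>x\<in>\<Union>H. (if x \<in> A then 1 else 0) * (if x \<in> B then (1::nat) else 0))
        = (\<Sum>x\<in>\<Union>H. if x \<in> A \<inter> B then 1 else 0)" by (intro sum.cong) auto
    also have "... = card {x \<in> \<Union>H. x \<in> A \<inter> B}" using fU by (simp add: sum.inter_filter[symmetric])
    also have "{x \<in> \<Union>H. x \<in> A \<inter> B} = A \<inter> B" using ab by auto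
    finally show "(\<Sum>x\<in>\<Union>H. (if x \<in> A then 1 else 0) * (if x \<in> B then 1 else 0)) = card (A \<inter> B)" .
  qed
  finally show ?thesis .
qed

lemma pairs_mono:
  assumes "H \<subseteq> H'" "finite H'"
  shows "(\<Sum>A\<in>H. \<Sum>B\<in>H. card (A \<inter> B)) \<le> (\<Sum>A\<in>H'. \<Sum>B\<in>H'. card (A \<inter> (B::'a set)))"
proof -
  have "(\<Sum>A\<in>H. \<Sum>B\<in>H. card (A \<inter> B)) \<le> (\<Sum>A\<in>H. \<Sum>B\<in>H'. card (A \<inter> B))"
    using assms by (intro sum_mono sum_mono2) auto
  also have "... \<le> (\<Sum>A\<in>H'. \<Sum>B\<in>H'. card (A \<inter> B))"
    using assms by (intro sum_mono2) auto
  finally show ?thesis .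
qed

lemma card_inter_less:
  assumes "finite A" "finite B" "card A = r" "card B = r" "A \<noteq> B"
  shows "card (A \<inter> B) < r"
proof -
  have "A \<inter> B \<noteq> A"
  proof
    assume "A \<inter> B = A"
    then have "A \<subseteq> B" by auto
    then have "A = B" using card_subset_eq assms by metis
    then show False using assms by simp
  qed
  then have "A \<inter> B \<subset> A" by auto
  then show ?thesis using psubset_card_mono assms by metis
qed

lemma delta2:
  assumes "finite H" "X \<in> H" "Y \<in> H"
  shows "(\<Sum>A\<in>H. \<Sum>B\<in>H. if A = X then if B = Y then 1 else 0 else 0) = (1::int)"
proof -
  have "(\<Sum>B\<in>H. if A = X then if B = Y then 1 else 0 else 0) = (if A = X then 1 else (0::int))" for A
    using assms by (cases "A = X") (simp_all add: sum.delta')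
  then show ?thesis using assms by (simp add: sum.delta')
qed

lemma pairs_upper:
  assumes fH: "finite H" and cH: "\<forall>A\<in>H. finite A \<and> card A = r"
    and a0: "A0 \<in> H" and c0: "C0 \<in> H" and ne: "A0 \<noteq> C0"
    and i0: "card (A0 \<inter> C0) + 2 = r"
  shows "int (\<Sum>A\<in>H. \<Sum>B\<in>H. card (A \<inter> B)) \<le> int (card H)^2 * (int r - 1) + int (card H) - 2"
proof -
  define h where "h A B = (int r - 1) + (if A = B then 1 else 0)
      - (if A = A0 then (if B = C0 then 1 else 0) else 0)
      - (if A = C0 then (if B = A0 then 1 else 0) else 0)" for A B
  have le: "int (card (A \<inter> B)) \<le> h A B" if "A \<in> H" "B \<in> H" for A B
  proof (cases "A = B")
    case True
    then show ?thesis using cH that ne unfolding h_def by auto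
  next
    case False
    have lt: "card (A \<inter> B) < r" using card_inter_less cH that False by blast
    have i0': "card (C0 \<inter> A0) + 2 = r" using i0 by (simp add: Int_commute)
    show ?thesis using False lt i0 i0' ne unfolding h_def by auto
  qed
  have "int (\<Sum>A\<in>H. \<Sum>B\<in>H. card (A \<inter> B)) = (\<Sum>A\<in>H. \<Sum>B\<in>H. int (card (A \<inter> B)))"
    by simp
  also have "... \<le> (\<Sum>A\<in>H. \<Sum>B\<in>H. h A B)"
    using le by (intro sum_mono) auto
  also have "... = int (card H)^2 * (int r - 1) + int (card H) - 2"
    unfolding h_def using fH a0 c0 ne
    by (simp add: sum.distrib sum_subtractf sum.delta sum.delta' power2_eq_square algebra_simps delta2)
  finally show ?thesis .
qed


lemma lex_member:
  assumes r1: "r \<ge> 1" and j: "r \<le> j" "j < r + s" and t: "s + r \<le> t + 1"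
  shows "insert j {1..<r} \<in> lex_family s r t"
proof -
  let ?K = "{1..<r}"
  let ?A = "insert j ?K"
  let ?R = "{B. B \<subseteq> {1..t} \<and> card B = r \<and> lex_less B ?A}"
  have cA: "card ?A = r" using j r1 by simp
  have sA: "?A \<subseteq> {1..t}" using j t r1 by auto
  have "?R \<subseteq> (\<lambda>i. insert i ?K) ` {r..<j}"
  proof
    fix B assume "B \<in> ?R"
    then have b: "B \<subseteq> {1..t}" "card B = r" "B \<noteq> ?A" "Min (B - ?A \<union> (?A - B)) \<in> B"
      unfolding lex_less_def by auto
    have fB: "finite B" using b(1) finite_subset by blast
    define D where "D = B - ?A \<union> (?A - B)"
    have fD: "finite D" unfolding D_def using fB by auto
    have Dne: "D \<noteq> {}" unfolding D_def using b(3) by auto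
    define m where "m = Min D"
    have mB: "m \<in> B" using b(4) unfolding m_def D_def by simp
    have mD: "m \<in> D" using fD Dne m_def by simp
    have mA: "m \<notin> ?A" using mD mB unfolding D_def by auto
    have m1: "m \<ge> 1" using mB b(1) by auto
    have mr: "m \<ge> r" using mA m1 by auto
    have KB: "?K \<subseteq> B"
    proof
      fix k assume k: "k \<in> ?K"
      show "k \<in> B"
      proof (rule ccontr)
        assume "k \<notin> B"
        then have "k \<in> D" unfolding D_def using k by auto
        then have "m \<le> k" unfolding m_def using fD by simp
        then show False using k mr by auto
      qed
    qed
    have "card (B - ?K) = 1" using KB b(2) fB r1 by (simp add: card_Diff_subset)
    then obtain i where i: "B - ?K = {i}" using card_1_singletonE by blast
    have Bi: "B = insert i ?K" using i KB by auto
    have iK: "i \<notin> ?K" using i by auto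
    have i1: "i \<ge> 1" using Bi b(1) by auto
    have ir: "i \<ge> r" using iK i1 by auto
    have ij: "i \<noteq> j" using Bi b(3) by auto
    have jK: "j \<notin> ?K" using j by auto
    have "D = {i, j}" unfolding D_def using Bi ij iK jK by auto
    then have "m = min i j" unfolding m_def by simp
    moreover have "m = i" using mB mA Bi by auto
    ultimately have "i < j" using ij by linarith
    then show "B \<in> (\<lambda>i. insert i ?K) ` {r..<j}" using Bi ir by auto
  qed
  then have "card ?R \<le> card ((\<lambda>i. insert i ?K) ` {r..<j})" by (intro card_mono) auto
  also have "... \<le> card {r..<j}" by (rule card_image_le) simp
  also have "... < s" using j by simp
  finally show ?thesis unfolding lex_family_def using cA sA by auto
qed

lemma lex_lower:
  assumes r1: "r \<ge> 1" and t: "s + r \<le> t + 1"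
  shows "s^2 * (r - 1) + s \<le> P2 (lex_family s r t)"
proof -
  let ?K = "{1..<r}"
  let ?f = "\<lambda>i. insert i ?K"
  let ?S = "?f ` {r..<r+s}"
  have inj: "inj_on ?f {r..<r+s}" by (rule inj_onI) auto
  have SL: "?S \<subseteq> lex_family s r t" using lex_member[OF r1 _ _ t] by auto
  have fL: "finite (lex_family s r t)"
  proof (rule finite_subset)
    show "lex_family s r t \<subseteq> Pow {1..t}" unfolding lex_family_def by auto
  qed simp
  have mem: "\<forall>A\<in>lex_family s r t. finite A"
    unfolding lex_family_def using finite_subset by blast
  have "(\<Sum>A\<in>?S. \<Sum>B\<in>?S. card (A \<inter> B)) = (\<Sum>i\<in>{r..<r+s}. \<Sum>j\<in>{r..<r+s}. card (?f i \<inter> ?f j))"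
    by (simp only: sum.reindex[OF inj] comp_def)
  also have "... = (\<Sum>i\<in>{r..<r+s}. \<Sum>j\<in>{r..<r+s}. (r - 1) + (if i = j then 1 else 0))"
  proof (intro sum.cong refl)
    fix i j assume ij: "i \<in> {r..<r+s}" "j \<in> {r..<r+s}"
    show "card (?f i \<inter> ?f j) = (r - 1) + (if i = j then 1 else 0)"
    proof (cases "i = j")
      case True then show ?thesis using ij r1 by simp
    next
      case False
      then have "?f i \<inter> ?f j = ?K" using ij by auto
      then show ?thesis using False r1 by simp
    qed
  qed
  also have "... = s^2 * (r - 1) + s"
    by (simp add: sum.distrib sum.delta power2_eq_square)
  finally have eq: "(\<Sum>A\<in>?S. \<Sum>B\<in>?S. card (A \<inter> B)) = s^2 * (r - 1) + s" .
  have "(\<Sum>A\<in>?S. \<Sum>B\<in>?S. card (A \<inter> B)) \<le> P2 (lex_family s r t)"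
    unfolding P2_pairs[OF fL mem] by (rule pairs_mono[OF SL fL])
  then show ?thesis using eq by simp
qed

theorem proposition6p4:
  fixes r s t :: nat
  assumes "r \<ge> 2" and "r + 2 \<le> s" and "s + r \<le> t + 1"
  shows "real (P2 (colex_family s r))
           \<le> (1 - 1 / (real r * real s ^ 2)) * real (P2 (lex_family s r t))"
proof -
  let ?C = "colex_family s r"
  let ?A0 = "{1..r}"
  let ?Z = "insert (r+1) {..<r-1}"
  have fC: "finite ?C" using colex_card[of s r] by blast
  have kC: "card ?C \<le> s" using colex_card[of s r] by blast
  have cC: "\<forall>A\<in>?C. finite A \<and> card A = r" unfolding colex_family_def by auto
  have a0: "?A0 \<in> ?C" using A0_in assms(2) by blast
  have c0: "?Z \<in> ?C" using C0_in assms(1,2) by blast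
  have ne: "?A0 \<noteq> ?Z" using assms(1) by (metis atLeastAtMost_iff insertI1 le_refl not_less_eq_eq Suc_eq_plus1)
  have "?A0 \<inter> ?Z = {1..<r-1}" using assms(1) by auto
  then have i0: "card (?A0 \<inter> ?Z) + 2 = r" using assms(1) by simp
  have up: "int (P2 ?C) \<le> int (card ?C)^2 * (int r - 1) + int (card ?C) - 2"
    using pairs_upper[OF fC cC a0 c0 ne i0] P2_pairs[OF fC] cC by simp
  have "int (card ?C)^2 * (int r - 1) \<le> int s^2 * (int r - 1)"
    using kC assms(1) by (intro mult_right_mono power_mono) auto
  then have up1: "int (P2 ?C) \<le> int s^2 * (int r - 1) + int s - 2"
    using up kC by linarith
  then have "real_of_int (int (P2 ?C)) \<le> real_of_int (int s^2 * (int r - 1) + int s - 2)"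
    by (simp only: of_int_le_iff)
  then have up2: "real (P2 ?C) \<le> real s^2 * (real r - 1) + real s - 2" by simp
  have lo: "real s^2 * (real r - 1) + real s \<le> real (P2 (lex_family s r t))"
  proof -
    have h: "s^2 * (r - 1) + s \<le> P2 (lex_family s r t)" using lex_lower[of r s t] assms by simp
    have "real (s^2 * (r - 1) + s) = real s^2 * (real r - 1) + real s"
      using assms(1) by (simp add: of_nat_diff)
    then show ?thesis using h by (metis of_nat_le_iff)
  qed
  define M where "M = real s^2 * (real r - 1) + real s"
  define e where "e = 1 / (real r * real s ^ 2)"
  have rs: "real r * real s^2 > 0" using assms by simp
  have sr: "real s \<le> real r * real s^2"
  proof -
    have "1 * 1 \<le> real r * real s" using assms by (intro mult_mono) auto
    then have "real s * 1 \<le> real s * (real r * real s)"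
      by (intro mult_left_mono) auto
    then show ?thesis by (simp add: power2_eq_square algebra_simps)
  qed
  have M2: "M \<le> 2 * (real r * real s^2)" 
  proof -
    have "0 \<le> real s^2" by simp
    then have "real s \<le> real s^2 + real r * real s^2" using sr by linarith
    then show ?thesis unfolding M_def by (simp add: algebra_simps)
  qed
  have eM: "e * M \<le> 2" unfolding e_def using M2 rs by (simp add: field_simps)
  have e1: "e \<le> 1"
  proof -
    have "1 \<le> real s" using assms by simp
    then have "1 \<le> real r * real s^2" using sr by linarith
    then show ?thesis unfolding e_def by simp
  qed
  have "real (P2 ?C) \<le> M - e * M" using up2 eM unfolding M_def by linarith
  also have "... = (1 - e) * M" by (simp add: algebra_simps)
  also have "... \<le> (1 - e) * real (P2 (lex_family s r t))"
    using lo e1 unfolding M_def by (intro mult_left_mono) auto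
  finally show ?thesis unfolding e_def .
qed

end
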